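(* Let $\vec X^m\in\underline V^h_{\partial_0}$ satisfy assumption $(\mathfrak A)$, assume $\vec\omega^m(q_j)\neq\vec0$ for all nodes $q_j\in\overline I\setminus\partial_0I$, and let $\Delta t_m>0$. Then there exists a unique pair $(\delta\vec X^{m+1},\vec\kappa^{m+1})\in\underline V^h_\partial\times\underline V^h$ such that, with $\vec X^{m+1}=\vec X^m+\delta\vec X^{m+1}$, $$\Big(\tfrac{\vec X^{m+1}-\vec X^m}{\Delta t_m},\vec\chi\,|\vec X^m_\rho|\Big)^h=\Big(\vec\kappa^{m+1}-\vec{\mathfrak K}^m(\vec\kappa^{m+1}),\vec\chi\,|\vec X^m_\rho|\Big)^h\quad\forall\,\vec\chi\in\underline V^h,$$ $$\Big(\vec\kappa^{m+1},\vec\eta\,|\vec X^m_\rho|\Big)^h+\Big(\vec X^{m+1}_\rho,\vec\eta_\rho|\vec X^m_\rho|^{-1}\Big)=-\sum_{i=1}^2\sum_{p\in\partial_iI}\widehat\varrho^{(p)}\,\vec\eta(p)\cdot\vec e_{3-i}\quad\forall\,\vec\eta\in\underline V^h_\partial .$$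
   Context: Setup. $\vec e_1=(1,0)^T$, $\vec e_2=(0,1)^T$; "$\cdot$" is the Euclidean inner product. $I$ is either the periodic interval $\mathbb R/\mathbb Z$ (with $\partial I=\emptyset$) or $I=(0,1)$ (with $\partial I=\{0,1\}$). $\partial I=\partial_DI\cup\partial_0I\cup\partial_1I\cup\partial_2I$ is a given disjoint partition, and $\widehat\varrho^{(p)}\in\mathbb R$, $p\in\{0,1\}$, are given constants with $|\widehat\varrho^{(p)}|\le1$. Let $J\ge3$, $h=1/J$, $q_j=jh$ ($j=0,\dots,J$; $q_0=q_J$ identified in the periodic case). $V^h$ is the space of continuous functions on $\overline I$ (periodic if $I=\mathbb R/\mathbb Z$) that are affine on each $[q_{j-1},q_j]$; $\underline V^h=[V^h]^2$; $\underline V^h_{\partial_0}=\{\vec\eta\in\underline V^h:\vec\eta(\rho)\cdot\vec e_1=0\ \forall\rho\in\partial_0I\}$; $\underline V^h_\partial=\{\vec\eta\in\underline V^h_{\partial_0}:\vec\eta(\rho)\cdot\vec e_i=0\ \forall\rho\in\partial_iI,\ i=1,2;\ \vec\eta(\rho)=\vec0\ \forall\rho\in\partial_DI\}$. $(\cdot,\cdot)$ is the $L^2(I)$ inner product (with dot product for vector functions), and for piecewise continuous $f,g$ the mass-lumped product is $(f,g)^h=\tfrac h2\sum_{j=1}^J[(fg)(q_j^-)+(fg)(q_{j-1}^+)]$. For $\vec X^m\in\underline V^h_{\partial_0}$ with $|\vec X^m_\rho|>0$ a.e., set $\vec\nu^m=-[\vec X^m_\rho]^\perp/|\vec X^m_\rho|$,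 where $(a,b)^\perp=(b,-a)$, and let $\vec\omega^m\in\underline V^h$ be defined by $(\vec\omega^m,\vec\varphi|\vec X^m_\rho|)^h=(\vec\nu^m,\vec\varphi|\vec X^m_\rho|)$ for all $\vec\varphi\in\underline V^h$. Assumption $(\mathfrak A)$: $|\vec X^m_\rho|>0$ a.e. on $I$ and $\vec X^m(\rho)\cdot\vec e_1>0$ for all $\rho\in\overline I\setminus\partial_0I$. For $\vec\kappa\in\underline V^h$, $\vec{\mathfrak K}^m(\vec\kappa)\in\underline V^h$ is defined nodally by $\vec{\mathfrak K}^m(\vec\kappa)(q_j)=\frac{\vec\omega^m(q_j)\cdot\vec e_1}{\vec X^m(q_j)\cdot\vec e_1}\,\frac{\vec\omega^m(q_j)}{|\vec\omega^m(q_j)|^2}$ if $q_j\in\overline I\setminus\partial_0I$ and $\vec{\mathfrak K}^m(\vec\kappa)(q_j)=-\vec\kappa(q_j)$ if $q_j\in\partial_0I$. *)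

theory Defs
  imports "HOL-Analysis.Analysis"
begin

(* A function in V^h (resp. [V^h]^2) is represented by its nodal values
   X j = X(q_j), j = 0..J, with X j = 0 for j > J (canonical representative);
   in the periodic case q_J is identified with q_0, i.e. X J = X 0.
   Vectors in R^2 are real \<times> real, with the Euclidean inner product (\<bullet>). *)

type_synonym vfun = "nat \<Rightarrow> real \<times> real"

definition hh :: "nat \<Rightarrow> real" where
  "hh J = 1 / real J"

definition node :: "nat \<Rightarrow> nat \<Rightarrow> real" where
  "node J j = real j / real J"

definition bdry :: "bool \<Rightarrow> real set" where
  "bdry per = (if per then {} else {0, 1})"

definition Vh :: "bool \<Rightarrow> nat \<Rightarrow> vfun set" where
  "Vh per J = {X. (\<forall>j>J. X j = 0) \<and> (per \<longrightarrow> X J = X 0)}"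

definition interp :: "nat \<Rightarrow> vfun \<Rightarrow> real \<Rightarrow> real \<times> real" where
  "interp J X r = (let k = nat \<lfloor>r * real J\<rfloor> in
     if k \<ge> J then X J
     else (real k + 1 - r * real J) *\<^sub>R X k + (r * real J - real k) *\<^sub>R X (Suc k))"

definition Vh_d0 :: "bool \<Rightarrow> nat \<Rightarrow> real set \<Rightarrow> vfun set" where
  "Vh_d0 per J P0 = {X \<in> Vh per J. \<forall>r\<in>P0. fst (interp J X r) = 0}"

definition Vh_d :: "bool \<Rightarrow> nat \<Rightarrow> real set \<Rightarrow> real set \<Rightarrow> real set \<Rightarrow> real set \<Rightarrow> vfun set" where
  "Vh_d per J D P0 P1 P2 = {X \<in> Vh_d0 per J P0.
      (\<forall>r\<in>P1. fst (interp J X r) = 0) \<and> (\<forall>r\<in>P2. snd (interp J X r) = 0)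
      \<and> (\<forall>r\<in>D. interp J X r = 0)}"

(* the (constant) derivative X_rho on the element [q_{j-1}, q_j], j = 1..J *)
definition drho :: "nat \<Rightarrow> vfun \<Rightarrow> nat \<Rightarrow> real \<times> real" where
  "drho J X j = real J *\<^sub>R (X j - X (j - 1))"

definition perp :: "real \<times> real \<Rightarrow> real \<times> real" where
  "perp v = (snd v, - fst v)"

(* mass lumped product (f,g)^h = h/2 \<Sum>_{j=1}^J [(fg)(q_j^-) + (fg)(q_{j-1}^+)],
   given fm j = (fg)(q_j^-) and fp j = (fg)(q_j^+) *)
definition lumped :: "nat \<Rightarrow> (nat \<Rightarrow> real) \<Rightarrow> (nat \<Rightarrow> real) \<Rightarrow> real" where
  "lumped J fm fp = hh J / 2 * (\<Sum>j=1..J. fm j + fp (j - 1))"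

definition mass :: "nat \<Rightarrow> vfun \<Rightarrow> vfun \<Rightarrow> vfun \<Rightarrow> real" where
  "mass J W a b = lumped J (\<lambda>j. (a j \<bullet> b j) * norm (drho J W j))
                            (\<lambda>j. (a j \<bullet> b j) * norm (drho J W (Suc j)))"

(* L2 product of elementwise constant vector functions (values f j on element j) *)
definition l2pc :: "nat \<Rightarrow> (nat \<Rightarrow> real \<times> real) \<Rightarrow> (nat \<Rightarrow> real \<times> real) \<Rightarrow> real" where
  "l2pc J f g = (\<Sum>j=1..J. hh J * (f j \<bullet> g j))"

definition nu :: "nat \<Rightarrow> vfun \<Rightarrow> nat \<Rightarrow> real \<times> real" where
  "nu J W j = - ((1 / norm (drho J W j)) *\<^sub>R perp (drho J W j))"

(* omega in [V^h]^2 with (omega, phi |W_rho|)^h = (nu, phi |W_rho|) for all phi;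
   the right-hand side is the exact integral, phi being affine on each element *)
definition omega :: "bool \<Rightarrow> nat \<Rightarrow> vfun \<Rightarrow> vfun" where
  "omega per J W = (THE w. w \<in> Vh per J \<and>
     (\<forall>\<phi>\<in>Vh per J. mass J W w \<phi> =
        (\<Sum>j=1..J. hh J * norm (drho J W j) * (nu J W j \<bullet> ((1/2) *\<^sub>R (\<phi> (j - 1) + \<phi> j))))))"

definition assmA :: "nat \<Rightarrow> real set \<Rightarrow> vfun \<Rightarrow> bool" where
  "assmA J P0 W = ((\<forall>j\<in>{1..J}. drho J W j \<noteq> 0) \<and>
                   (\<forall>r\<in>{0..1} - P0. fst (interp J W r) > 0))"

definition Kfrak :: "bool \<Rightarrow> nat \<Rightarrow> real set \<Rightarrow> vfun \<Rightarrow> vfun \<Rightarrow> vfun" where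
  "Kfrak per J P0 W \<kappa> j =
     (if j > J then 0
      else if node J j \<in> P0 then - \<kappa> j
      else (fst (omega per J W j) / fst (W j)) *\<^sub>R
             ((1 / (norm (omega per J W j))\<^sup>2) *\<^sub>R omega per J W j))"

end

theory Submission
  imports Defs "HOL-Library.Function_Algebras"
begin

context vector_space begin
lemma fd_lax_milgram:
  fixes A :: "'b \<Rightarrow> 'b \<Rightarrow> 'a" and F :: "'b \<Rightarrow> 'a"
  assumes subS: "subspace S" and fT: "finite T" and ST: "S \<subseteq> span T"
    and A1: "\<And>x y w. A (x + y) w = A x w + A y w"
    and A2: "\<And>c x w. A (c *s x) w = c * A x w"
    and A3: "\<And>x v w. A x (v + w) = A x v + A x w"
    and A4: "\<And>c x w. A x (c *s w) = c * A x w"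
    and F1: "\<And>v w. F (v + w) = F v + F w"
    and F2: "\<And>c w. F (c *s w) = c * F w"
    and inj: "\<And>z. z \<in> S \<Longrightarrow> \<forall>w\<in>S. A z w = 0 \<Longrightarrow> z = 0"
  shows "\<exists>!z. z \<in> S \<and> (\<forall>w\<in>S. A z w = F w)"
proof -
  obtain B where B: "B \<subseteq> S" "independent B" "S \<subseteq> span B" "card B = dim S"
    using basis_exists by blast
  have fB: "finite B" using independent_span_bound[OF fT B(2)] B(1) ST by blast
  have spB: "span B = S" using span_subspace[OF B(1) B(3) subS] .
  have A0: "A x 0 = 0" for x using A4[where c=0 and w=0 and x=x] by simp
  have F0: "F 0 = 0" using F2[where c=0 and w=0] by simp
  have Adiff: "A (x - y) w = A x w - A y w" for x y w
    using A1[where x="x - y" and y=y and w=w] by simp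
  have Asum: "A x (\<Sum>b\<in>B. u b *s b) = (\<Sum>b\<in>B. u b * A x b)" for x u
    by (induction B rule: infinite_finite_induct) (simp_all add: A0 A3 A4)
  have Fsum: "F (\<Sum>b\<in>B. u b *s b) = (\<Sum>b\<in>B. u b * F b)" for u
    by (induction B rule: infinite_finite_induct) (simp_all add: F0 F1 F2)
  have expn: "\<exists>u. w = (\<Sum>b\<in>B. u b *s b)" if "w \<in> S" for w
    using span_finite[OF fB] spB that by auto
  have ext: "A x w = F w" if a1: "\<forall>b\<in>B. A x b = F b" and a2: "w \<in> S" for x w
  proof -
    obtain u where u: "w = (\<Sum>b\<in>B. u b *s b)" using expn[OF a2] by blast
    show ?thesis unfolding u Asum Fsum using a1 by (intro sum.cong) simp_all
  qed
  have ext0: "A x w = 0" if a1: "\<forall>b\<in>B. A x b = 0" and a2: "w \<in> S" for x w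
  proof -
    obtain u where u: "w = (\<Sum>b\<in>B. u b *s b)" using expn[OF a2] by blast
    show ?thesis unfolding u Asum using a1 by simp
  qed
  have coef: "\<forall>b\<in>B. u b = 0" if "(\<Sum>b\<in>B. u b *s b) = 0" for u
    using dependent_finite[OF fB] B(2) that by blast
  define f where "f x = (\<Sum>b\<in>B. A x b *s b)" for x
  have lin: "module_hom scale scale f"
    unfolding module_hom_iff
  proof (intro conjI allI)
    show "module scale" by unfold_locales
    show "module scale" by unfold_locales
    show "f (x + y) = f x + f y" for x y
      by (simp add: f_def A1 scale_left_distrib sum.distrib)
    show "f (c *s x) = c *s f x" for c x
      by (simp add: f_def A2 scale_sum_right)
  qed
  interpret fh: module_hom scale scale f by fact
  have injf: "inj_on f S"
    unfolding fh.inj_on_iff_eq_0[OF subS]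
  proof (intro ballI impI)
    fix x assume x: "x \<in> S" "f x = 0"
    have "(\<Sum>b\<in>B. A x b *s b) = 0" using x(2) unfolding f_def .
    then have h: "\<forall>b\<in>B. A x b = 0" by (rule coef)
    have "\<forall>w\<in>S. A x w = 0" using ext0[OF h] by blast
    then show "x = 0" by (rule inj[OF x(1)])
  qed
  have fS: "f x \<in> S" for x
  proof -
    have "f x \<in> span B" unfolding f_def by (intro span_sum span_scale span_base)
    then show ?thesis using spB by simp
  qed
  have indfB: "independent (f ` B)"
    using fh.independent_injective_image[OF B(2)] injf spB by simp
  have cardfB: "card (f ` B) = card B"
    using card_image inj_on_subset[OF injf B(1)] by blast
  have "S \<subseteq> span (f ` B)"
  proof
    fix a assume a: "a \<in> S"
    show "a \<in> span (f ` B)"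
    proof (rule ccontr)
      assume na: "a \<notin> span (f ` B)"
      then have anot: "a \<notin> f ` B" using span_base by blast
      have "independent (insert a (f ` B))" using indfB na anot by (simp add: independent_insert)
      moreover have "insert a (f ` B) \<subseteq> span B" using a fS spB by auto
      ultimately have "card (insert a (f ` B)) \<le> card B" using independent_span_bound[OF fB] by blast
      moreover have "card (insert a (f ` B)) = card B + 1" using anot cardfB fB by simp
      ultimately show False by simp
    qed
  qed
  also have "span (f ` B) = f ` S" using fh.span_image spB by simp
  finally have surj: "S \<subseteq> f ` S" .
  define y where "y = (\<Sum>b\<in>B. F b *s b)"
  have "y \<in> span B" unfolding y_def by (intro span_sum span_scale span_base)
  then have "y \<in> S" using spB by simp
  then obtain x where x: "x \<in> S" "f x = y" using surj by blast
  have "(\<Sum>b\<in>B. (A x b - F b) *s b) = 0"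
    using x(2) by (simp add: f_def y_def scale_left_diff_distrib sum_subtractf)
  then have "\<forall>b\<in>B. A x b = F b" using coef[of "\<lambda>b. A x b - F b"] by simp
  then have sol: "\<forall>w\<in>S. A x w = F w" using ext by blast
  show ?thesis
  proof (rule ex1I[of _ x])
    show "x \<in> S \<and> (\<forall>w\<in>S. A x w = F w)" using x(1) sol by blast
    fix x' assume x': "x' \<in> S \<and> (\<forall>w\<in>S. A x' w = F w)"
    have "x' - x = 0"
      using inj[of "x' - x"] x' sol x(1) subS by (simp add: Adiff subspace_diff)
    then show "x' = x" by simp
  qed
qed
end

lemma mass_add1: "mass J W (\<lambda>j. a j + b j) c = mass J W a c + mass J W b c"
  by (simp add: mass_def lumped_def inner_add_left algebra_simps sum.distrib)
lemma mass_scale1: "mass J W (\<lambda>j. r *\<^sub>R a j) c = r * mass J W a c"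
  by (simp add: mass_def lumped_def algebra_simps sum_distrib_left)
lemma mass_add2: "mass J W c (\<lambda>j. a j + b j) = mass J W c a + mass J W c b"
  by (simp add: mass_def lumped_def inner_add_right algebra_simps sum.distrib)
lemma mass_scale2: "mass J W c (\<lambda>j. r *\<^sub>R a j) = r * mass J W c a"
  by (simp add: mass_def lumped_def algebra_simps sum_distrib_left)
lemma mass_zero2: "mass J W c (\<lambda>j. 0) = 0"
  by (simp add: mass_def lumped_def)
lemma mass_zero1: "mass J W (\<lambda>j. 0) c = 0"
  by (simp add: mass_def lumped_def)
lemma mass_diff1: "mass J W (\<lambda>j. a j - b j) c = mass J W a c - mass J W b c"
  by (simp add: mass_def lumped_def inner_diff_left algebra_simps sum_subtractf)

lemma l2pc_add1: "l2pc J (\<lambda>j. a j + b j) c = l2pc J a c + l2pc J b c"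
  by (simp add: l2pc_def inner_add_left algebra_simps sum.distrib)
lemma l2pc_add2: "l2pc J c (\<lambda>j. a j + b j) = l2pc J c a + l2pc J c b"
  by (simp add: l2pc_def inner_add_right algebra_simps sum.distrib)
lemma l2pc_scale1: "l2pc J (\<lambda>j. r *\<^sub>R a j) c = r * l2pc J a c"
  by (simp add: l2pc_def algebra_simps sum_distrib_left)
lemma l2pc_scale2: "l2pc J c (\<lambda>j. r *\<^sub>R a j) = r * l2pc J c a"
  by (simp add: l2pc_def algebra_simps sum_distrib_left)
lemma l2pc_zero2: "l2pc J c (\<lambda>j. 0) = 0"
  by (simp add: l2pc_def)

lemma drho_add: "drho J (\<lambda>j. a j + b j) = (\<lambda>j. drho J a j + drho J b j)"
  by (simp add: drho_def fun_eq_iff algebra_simps)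
lemma drho_scale: "drho J (\<lambda>j. r *\<^sub>R a j) = (\<lambda>j. r *\<^sub>R drho J a j)"
  by (simp add: drho_def fun_eq_iff algebra_simps)
lemma drho_zero: "drho J (\<lambda>j. 0) = (\<lambda>j. 0)"
  by (simp add: drho_def fun_eq_iff)

lemma interp_add: "interp J (\<lambda>j. a j + b j) r = interp J a r + interp J b r"
  by (simp add: interp_def Let_def algebra_simps)
lemma interp_scale: "interp J (\<lambda>j. c *\<^sub>R a j) r = c *\<^sub>R interp J a r"
  by (simp add: interp_def Let_def algebra_simps)
lemma interp_zero: "interp J (\<lambda>j. 0) r = 0"
  by (simp add: interp_def Let_def)

lemma Vh_add: "a \<in> Vh per J \<Longrightarrow> b \<in> Vh per J \<Longrightarrow> (\<lambda>j. a j + b j) \<in> Vh per J"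
  by (simp add: Vh_def)
lemma Vh_scale: "a \<in> Vh per J \<Longrightarrow> (\<lambda>j. c *\<^sub>R a j) \<in> Vh per J"
  by (simp add: Vh_def)
lemma Vh_zero: "(\<lambda>j. 0) \<in> Vh per J"
  by (simp add: Vh_def)
lemma Vhd_add: "a \<in> Vh_d per J D P0 P1 P2 \<Longrightarrow> b \<in> Vh_d per J D P0 P1 P2 \<Longrightarrow> (\<lambda>j. a j + b j) \<in> Vh_d per J D P0 P1 P2"
  by (simp add: Vh_d_def Vh_d0_def Vh_def interp_add)
lemma Vhd_scale: "a \<in> Vh_d per J D P0 P1 P2 \<Longrightarrow> (\<lambda>j. c *\<^sub>R a j) \<in> Vh_d per J D P0 P1 P2"
  by (simp add: Vh_d_def Vh_d0_def Vh_def interp_scale)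
lemma Vhd_zero: "(\<lambda>j. 0) \<in> Vh_d per J D P0 P1 P2"
  by (simp add: Vh_d_def Vh_d0_def Vh_def interp_zero)
lemma Vhd_Vh: "a \<in> Vh_d per J D P0 P1 P2 \<Longrightarrow> a \<in> Vh per J"
  by (simp add: Vh_d_def Vh_d0_def)

lemma mass_nonneg:
  assumes "\<forall>j\<le>J. 0 \<le> a j \<bullet> b j" shows "0 \<le> mass J W a b"
  unfolding mass_def lumped_def hh_def using assms
  by (intro mult_nonneg_nonneg sum_nonneg add_nonneg_nonneg) auto

lemma mass_zero_nodes:
  assumes J: "J > 0" and d: "\<forall>j\<in>{1..J}. drho J W j \<noteq> 0"
    and nn: "\<forall>j\<le>J. 0 \<le> a j \<bullet> b j" and z: "mass J W a b = 0"
  shows "\<forall>j\<le>J. a j \<bullet> b j = 0"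
proof -
  let ?t = "\<lambda>j. (a j \<bullet> b j) * norm (drho J W j) + (a (j - 1) \<bullet> b (j - 1)) * norm (drho J W (Suc (j - 1)))"
  have hpos: "hh J / 2 > 0" using J by (simp add: hh_def)
  have "hh J / 2 * sum ?t {1..J} = 0" using z by (simp add: mass_def lumped_def)
  then have s0: "sum ?t {1..J} = 0" using hpos by simp
  have tnn: "\<forall>j\<in>{1..J}. 0 \<le> ?t j" using nn by (auto intro!: add_nonneg_nonneg mult_nonneg_nonneg)
  have t0: "\<forall>j\<in>{1..J}. ?t j = 0" using sum_nonneg_eq_0_iff[of "{1..J}" ?t] s0 tnn by simp
  show ?thesis
  proof (intro allI impI)
    fix j assume jJ: "j \<le> J"
    show "a j \<bullet> b j = 0"
    proof (cases "j = 0")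
      case True
      have "(1::nat) \<in> {1..J}" using J by simp
      then have "?t 1 = 0" using t0 by blast
      moreover have "drho J W 1 \<noteq> 0" using d J by auto
      moreover have "0 \<le> a 1 \<bullet> b 1" "0 \<le> a 0 \<bullet> b 0" using nn J by auto
      ultimately show ?thesis using True
        by (smt (verit) mult_nonneg_nonneg norm_ge_zero norm_le_zero_iff One_nat_def diff_Suc_1 mult_eq_0_iff)
    next
      case False
      have "j \<in> {1..J}" using jJ False by simp
      then have "?t j = 0" using t0 by blast
      moreover have "drho J W j \<noteq> 0" using d jJ False by auto
      moreover have "0 \<le> a j \<bullet> b j" "0 \<le> a (j-1) \<bullet> b (j-1)" using nn jJ by auto
      ultimately show ?thesis
        by (smt (verit) mult_nonneg_nonneg norm_ge_zero norm_le_zero_iff mult_eq_0_iff)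
    qed
  qed
qed

definition fscale :: "real \<Rightarrow> (nat \<Rightarrow> 'a::real_vector) \<Rightarrow> nat \<Rightarrow> 'a" where
  "fscale c f = (\<lambda>j. c *\<^sub>R f j)"

lemma vs_fscale: "vector_space (fscale :: real \<Rightarrow> (nat \<Rightarrow> 'a::real_vector) \<Rightarrow> nat \<Rightarrow> 'a)"
  unfolding vector_space_def fscale_def by (simp add: fun_eq_iff scaleR_add_right scaleR_add_left)

lemma mod_fscale: "module (fscale :: real \<Rightarrow> (nat \<Rightarrow> 'a::real_vector) \<Rightarrow> nat \<Rightarrow> 'a)"
  using vs_fscale module_iff_vector_space by blast

type_synonym zfun = "nat \<Rightarrow> (real \<times> real) \<times> (real \<times> real)"

definition dXof :: "zfun \<Rightarrow> vfun" where "dXof z = (\<lambda>j. fst (z j))"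
definition kof :: "zfun \<Rightarrow> vfun" where "kof z = (\<lambda>j. snd (z j))"

lemma dXof_add: "dXof (x + y) = (\<lambda>j. dXof x j + dXof y j)" by (simp add: dXof_def)
lemma kof_add: "kof (x + y) = (\<lambda>j. kof x j + kof y j)" by (simp add: kof_def)
lemma dXof_scale: "dXof (fscale c x) = (\<lambda>j. c *\<^sub>R dXof x j)" by (simp add: dXof_def fscale_def)
lemma kof_scale: "kof (fscale c x) = (\<lambda>j. c *\<^sub>R kof x j)" by (simp add: kof_def fscale_def)

definition Klin :: "nat \<Rightarrow> real set \<Rightarrow> vfun \<Rightarrow> vfun" where
  "Klin J P0 k j = (if j \<le> J \<and> node J j \<in> P0 then - k j else 0)"

definition a1of :: "nat \<Rightarrow> real set \<Rightarrow> real \<Rightarrow> zfun \<Rightarrow> vfun" where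
  "a1of J P0 dt z = (\<lambda>j. (1/dt) *\<^sub>R dXof z j - kof z j + Klin J P0 (kof z) j)"

lemma a1of_add: "a1of J P0 dt (x + y) = (\<lambda>j. a1of J P0 dt x j + a1of J P0 dt y j)"
  by (simp add: a1of_def dXof_def kof_def Klin_def fun_eq_iff algebra_simps)
lemma a1of_scale: "a1of J P0 dt (fscale c x) = (\<lambda>j. c *\<^sub>R a1of J P0 dt x j)"
  by (simp add: a1of_def dXof_def kof_def Klin_def fscale_def fun_eq_iff algebra_simps)

definition gof :: "nat \<Rightarrow> vfun \<Rightarrow> vfun \<Rightarrow> vfun" where
  "gof J Xm e = (\<lambda>j. (1 / norm (drho J Xm j)) *\<^sub>R drho J e j)"

lemma gof_add: "gof J Xm (\<lambda>j. a j + b j) = (\<lambda>j. gof J Xm a j + gof J Xm b j)"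
  by (simp add: gof_def drho_add fun_eq_iff algebra_simps)
lemma gof_scale: "gof J Xm (\<lambda>j. c *\<^sub>R a j) = (\<lambda>j. c *\<^sub>R gof J Xm a j)"
  by (simp add: gof_def drho_scale fun_eq_iff algebra_simps)
lemma gof_zero: "gof J Xm (\<lambda>j. 0) = (\<lambda>j. 0)"
  by (simp add: gof_def drho_zero)

definition Aform :: "nat \<Rightarrow> real set \<Rightarrow> vfun \<Rightarrow> real \<Rightarrow> zfun \<Rightarrow> zfun \<Rightarrow> real" where
  "Aform J P0 Xm dt z w = mass J Xm (a1of J P0 dt z) (kof w) + mass J Xm (kof z) (dXof w)
     + l2pc J (drho J (dXof z)) (gof J Xm (dXof w))"

definition RHS :: "nat \<Rightarrow> real set \<Rightarrow> real set \<Rightarrow> (real \<Rightarrow> real) \<Rightarrow> vfun \<Rightarrow> real" where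
  "RHS J P1 P2 rho_hat e = - ((\<Sum>p\<in>P1. rho_hat p * (interp J e p \<bullet> (0, 1)))
           + (\<Sum>p\<in>P2. rho_hat p * (interp J e p \<bullet> (1, 0))))"

lemma RHS_add: "RHS J P1 P2 rho_hat (\<lambda>j. a j + b j) = RHS J P1 P2 rho_hat a + RHS J P1 P2 rho_hat b"
  by (simp add: RHS_def interp_add inner_add_left algebra_simps sum.distrib)
lemma RHS_scale: "RHS J P1 P2 rho_hat (\<lambda>j. c *\<^sub>R a j) = c * RHS J P1 P2 rho_hat a"
  by (simp add: RHS_def interp_scale algebra_simps sum_distrib_left)
lemma RHS_zero: "RHS J P1 P2 rho_hat (\<lambda>j. 0) = 0"
  by (simp add: RHS_def interp_zero)

definition Fform :: "bool \<Rightarrow> nat \<Rightarrow> real set \<Rightarrow> real set \<Rightarrow> real set \<Rightarrow> (real \<Rightarrow> real) \<Rightarrow> vfun \<Rightarrow> zfun \<Rightarrow> real" where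
  "Fform per J P0 P1 P2 rho_hat Xm w = - mass J Xm (Kfrak per J P0 Xm (\<lambda>_. 0)) (kof w)
     + RHS J P1 P2 rho_hat (dXof w) - l2pc J (drho J Xm) (gof J Xm (dXof w))"

lemma Aform_add1: "Aform J P0 Xm dt (x + y) w = Aform J P0 Xm dt x w + Aform J P0 Xm dt y w"
  by (simp add: Aform_def a1of_add kof_add dXof_add drho_add mass_add1 l2pc_add1)
lemma Aform_scale1: "Aform J P0 Xm dt (fscale c x) w = c * Aform J P0 Xm dt x w"
  by (simp add: Aform_def a1of_scale kof_scale dXof_scale drho_scale mass_scale1 l2pc_scale1 algebra_simps)
lemma Aform_add2: "Aform J P0 Xm dt z (v + w) = Aform J P0 Xm dt z v + Aform J P0 Xm dt z w"
  by (simp add: Aform_def kof_add dXof_add gof_add mass_add2 l2pc_add2)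
lemma Aform_scale2: "Aform J P0 Xm dt z (fscale c w) = c * Aform J P0 Xm dt z w"
  by (simp add: Aform_def kof_scale dXof_scale gof_scale mass_scale2 l2pc_scale2 algebra_simps)
lemma Fform_add: "Fform per J P0 P1 P2 rho_hat Xm (v + w) = Fform per J P0 P1 P2 rho_hat Xm v + Fform per J P0 P1 P2 rho_hat Xm w"
  by (simp add: Fform_def kof_add dXof_add gof_add mass_add2 l2pc_add2 RHS_add)
lemma Fform_scale: "Fform per J P0 P1 P2 rho_hat Xm (fscale c w) = c * Fform per J P0 P1 P2 rho_hat Xm w"
  by (simp add: Fform_def kof_scale dXof_scale gof_scale mass_scale2 l2pc_scale2 RHS_scale algebra_simps)

definition SS :: "bool \<Rightarrow> nat \<Rightarrow> real set \<Rightarrow> real set \<Rightarrow> real set \<Rightarrow> real set \<Rightarrow> zfun set" where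
  "SS per J D P0 P1 P2 = {z. dXof z \<in> Vh_d per J D P0 P1 P2 \<and> kof z \<in> Vh per J}"

lemma SS_subspace: "module.subspace fscale (SS per J D P0 P1 P2)"
proof (rule module.subspaceI[OF mod_fscale])
  show "0 \<in> SS per J D P0 P1 P2"
    using Vhd_zero Vh_zero by (simp add: SS_def dXof_def kof_def)
  show "x + y \<in> SS per J D P0 P1 P2" if "x \<in> SS per J D P0 P1 P2" "y \<in> SS per J D P0 P1 P2" for x y
    using that by (simp add: SS_def dXof_add kof_add Vhd_add Vh_add)
  show "fscale c x \<in> SS per J D P0 P1 P2" if "x \<in> SS per J D P0 P1 P2" for c x
    using that by (simp add: SS_def dXof_scale kof_scale Vhd_scale Vh_scale)
qed

lemma sum_fun_apply': "(\<Sum>x\<in>X. g x) i = (\<Sum>x\<in>X. g x i)"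
  by (induction X rule: infinite_finite_induct) auto

lemma SS_findim:
  "SS per J D P0 P1 P2 \<subseteq> module.span fscale
     ((\<lambda>(j, b). (\<lambda>i. if i = j then b else 0)) ` ({..J} \<times> Basis))"
  (is "_ \<subseteq> module.span fscale ?T")
proof
  fix z assume z: "z \<in> SS per J D P0 P1 P2"
  have zJ: "z i = 0" if "i > J" for i
  proof -
    have "fst (z i) = 0" "snd (z i) = 0" using z that
      by (auto simp: SS_def dXof_def kof_def Vh_d_def Vh_d0_def Vh_def)
    then show ?thesis by (simp add: prod_eq_iff)
  qed
  have eq: "z = (\<Sum>j\<in>{..J}. \<Sum>b\<in>Basis. fscale (z j \<bullet> b) (\<lambda>i. if i = j then b else 0))"
  proof (rule ext)
    fix i
    have "(\<Sum>j\<in>{..J}. \<Sum>b\<in>Basis. fscale (z j \<bullet> b) (\<lambda>i. if i = j then b else 0)) i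
        = (\<Sum>j\<in>{..J}. \<Sum>b\<in>Basis. (z j \<bullet> b) *\<^sub>R (if i = j then b else 0))"
      by (simp add: sum_fun_apply' fscale_def)
    also have "\<dots> = (\<Sum>j\<in>{..J}. if i = j then (\<Sum>b\<in>Basis. (z j \<bullet> b) *\<^sub>R b) else 0)"
      by (intro sum.cong) auto
    also have "\<dots> = (if i \<le> J then z i else 0)"
      by (simp add: euclidean_representation)
    also have "\<dots> = z i" using zJ by simp
    finally show "z i = (\<Sum>j\<in>{..J}. \<Sum>b\<in>Basis. fscale (z j \<bullet> b) (\<lambda>i. if i = j then b else 0)) i" by simp
  qed
  have "(\<Sum>j\<in>{..J}. \<Sum>b\<in>Basis. fscale (z j \<bullet> b) (\<lambda>i. if i = j then b else 0)) \<in> module.span fscale ?T"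
  proof (intro module.span_sum[OF mod_fscale] module.span_scale[OF mod_fscale] module.span_base[OF mod_fscale])
    fix j b assume "j \<in> {..J}" "b \<in> (Basis :: ((real \<times> real) \<times> (real \<times> real)) set)"
    then show "(\<lambda>i. if i = j then b else 0) \<in> ?T" by force
  qed
  then show "z \<in> module.span fscale ?T" using eq by simp
qed

lemma coercive:
  assumes J: "J > 0" and d: "\<forall>j\<in>{1..J}. drho J Xm j \<noteq> 0" and dt: "dt > 0"
    and perP0: "per \<longrightarrow> P0 = {}"
    and z: "z \<in> SS per J D P0 P1 P2"
    and A0: "\<forall>w\<in>SS per J D P0 P1 P2. Aform J P0 Xm dt z w = 0"
  shows "z = 0"
proof -
  define a where "a = a1of J P0 dt z"
  define k where "k = kof z"
  define dX where "dX = dXof z"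
  have dXV: "dX \<in> Vh_d per J D P0 P1 P2" and kV: "k \<in> Vh per J"
    using z by (auto simp: SS_def dX_def k_def)
  have dXV': "dX \<in> Vh per J" using dXV by (rule Vhd_Vh)
  have aV: "a \<in> Vh per J"
  proof -
    have "a j = 0" if "j > J" for j
      using that dXV' kV by (simp add: a_def a1of_def Vh_def Klin_def flip: dX_def k_def)
    moreover have "a J = a 0" if per
      using that perP0 dXV' kV by (simp add: a_def a1of_def Vh_def Klin_def flip: dX_def k_def)
    ultimately show ?thesis by (simp add: Vh_def)
  qed
  define w1 :: zfun where "w1 = (\<lambda>j. (0, a j))"
  have w1S: "w1 \<in> SS per J D P0 P1 P2"
    using aV Vhd_zero by (simp add: SS_def w1_def dXof_def kof_def)
  have "Aform J P0 Xm dt z w1 = mass J Xm a a"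
    by (simp add: Aform_def w1_def dXof_def kof_def gof_zero mass_zero2 l2pc_zero2 flip: a_def)
  then have "mass J Xm a a = 0" using A0 w1S by simp
  then have "\<forall>j\<le>J. a j \<bullet> a j = 0"
    using mass_zero_nodes[OF J d] by simp
  then have a0: "a j = 0" if "j \<le> J" for j using that by simp
  have dXk: "dX j = (if node J j \<in> P0 then dt *\<^sub>R k j + dt *\<^sub>R k j else dt *\<^sub>R k j)" if "j \<le> J" for j
  proof -
    have "(1/dt) *\<^sub>R dX j - k j + Klin J P0 k j = 0"
      using a0[OF that] by (simp add: a_def a1of_def flip: dX_def k_def)
    then have "(1/dt) *\<^sub>R dX j = k j - Klin J P0 k j" by (simp add: algebra_simps)
    then have "dt *\<^sub>R ((1/dt) *\<^sub>R dX j) = dt *\<^sub>R (k j - Klin J P0 k j)" by simp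
    then have "dX j = dt *\<^sub>R (k j - Klin J P0 k j)" using dt by simp
    then show ?thesis using that by (auto simp: Klin_def algebra_simps)
  qed
  have nn: "0 \<le> k j \<bullet> dX j" if "j \<le> J" for j
    using dXk[OF that] dt by (auto simp: inner_add_right)
  define w2 :: zfun where "w2 = (\<lambda>j. (dX j, 0))"
  have w2S: "w2 \<in> SS per J D P0 P1 P2"
    using dXV Vh_zero by (simp add: SS_def w2_def dXof_def kof_def)
  have "Aform J P0 Xm dt z w2 = mass J Xm k dX + l2pc J (drho J dX) (gof J Xm dX)"
  proof -
    have "dXof w2 = dX" "kof w2 = (\<lambda>j. 0)" by (simp_all add: w2_def dXof_def kof_def)
    then show ?thesis by (simp add: Aform_def mass_zero2 flip: k_def dX_def)
  qed
  then have s0: "mass J Xm k dX + l2pc J (drho J dX) (gof J Xm dX) = 0" using A0 w2S by simp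
  have l2nn: "0 \<le> l2pc J (drho J dX) (gof J Xm dX)"
  proof -
    have "0 \<le> hh J * (drho J dX j \<bullet> gof J Xm dX j)" for j
      unfolding gof_def hh_def inner_scaleR_right by (intro mult_nonneg_nonneg) auto
    then show ?thesis unfolding l2pc_def by (intro sum_nonneg) blast
  qed
  have mnn: "0 \<le> mass J Xm k dX" using nn by (intro mass_nonneg) simp
  have "mass J Xm k dX = 0" using s0 l2nn mnn by linarith
  then have kd0: "\<forall>j\<le>J. k j \<bullet> dX j = 0" using mass_zero_nodes[OF J d] nn by blast
  have zj: "z j = 0" for j
  proof (cases "j \<le> J")
    case True
    have "k j \<bullet> dX j = 0" using kd0 True by simp
    moreover have "k j \<bullet> dX j = (if node J j \<in> P0 then 2 * dt * (k j \<bullet> k j) else dt * (k j \<bullet> k j))"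
      unfolding dXk[OF True] by (simp add: inner_add_right)
    ultimately have "dt * (k j \<bullet> k j) = 0" by (simp split: if_splits)
    then have "k j = 0" using dt by simp
    moreover have "dX j = 0" using dXk[OF True] calculation by simp
    ultimately show ?thesis by (simp add: prod_eq_iff k_def kof_def dX_def dXof_def)
  next
    case False
    then have "k j = 0" "dX j = 0" using kV dXV' by (auto simp: Vh_def)
    then show ?thesis by (simp add: prod_eq_iff k_def kof_def dX_def dXof_def)
  qed
  then show ?thesis by (simp add: fun_eq_iff)
qed

lemma Kfrak_split: "Kfrak per J P0 Xm k j = Klin J P0 k j + Kfrak per J P0 Xm (\<lambda>_. 0) j"
  by (simp add: Kfrak_def Klin_def)

lemma equiv_sys:
  fixes dX k :: vfun
  defines "Z \<equiv> (\<lambda>j. (dX j, k j))"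
  shows "(dX \<in> Vh_d per J D P0 P1 P2 \<and> k \<in> Vh per J \<and>
      (\<forall>chi\<in>Vh per J.
         mass J Xm (\<lambda>j. (1 / dt) *\<^sub>R ((Xm j + dX j) - Xm j)) chi
       = mass J Xm (\<lambda>j. k j - Kfrak per J P0 Xm k j) chi) \<and>
      (\<forall>\<eta>\<in>Vh_d per J D P0 P1 P2.
         mass J Xm k \<eta>
         + l2pc J (drho J (\<lambda>j. Xm j + dX j))
                  (\<lambda>j. (1 / norm (drho J Xm j)) *\<^sub>R drho J \<eta> j)
       = - ((\<Sum>p\<in>P1. rho_hat p * (interp J \<eta> p \<bullet> (0, 1)))
           + (\<Sum>p\<in>P2. rho_hat p * (interp J \<eta> p \<bullet> (1, 0))))))
   \<longleftrightarrow> (Z \<in> SS per J D P0 P1 P2 \<and>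
         (\<forall>w\<in>SS per J D P0 P1 P2. Aform J P0 Xm dt Z w = Fform per J P0 P1 P2 rho_hat Xm w))" (is "?L \<longleftrightarrow> ?R")
proof -
  define cK where "cK = Kfrak per J P0 Xm (\<lambda>_. 0)"
  have dXZ: "dXof Z = dX" "kof Z = k" by (simp_all add: Z_def dXof_def kof_def)
  have E1iff: "(mass J Xm (\<lambda>j. (1 / dt) *\<^sub>R ((Xm j + dX j) - Xm j)) chi
       = mass J Xm (\<lambda>j. k j - Kfrak per J P0 Xm k j) chi)
      \<longleftrightarrow> mass J Xm (a1of J P0 dt Z) chi = - mass J Xm cK chi" for chi
  proof -
    have "(\<lambda>j. a1of J P0 dt Z j + cK j)
        = (\<lambda>j. (1 / dt) *\<^sub>R ((Xm j + dX j) - Xm j) - (k j - Kfrak per J P0 Xm k j))"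
      by (rule ext) (simp add: a1of_def dXZ cK_def Kfrak_split[of per J P0 Xm k] algebra_simps)
    then have "mass J Xm (a1of J P0 dt Z) chi + mass J Xm cK chi
        = mass J Xm (\<lambda>j. (1 / dt) *\<^sub>R ((Xm j + dX j) - Xm j)) chi
          - mass J Xm (\<lambda>j. k j - Kfrak per J P0 Xm k j) chi"
      using mass_add1[of J Xm "a1of J P0 dt Z" cK chi]
        mass_diff1[of J Xm "\<lambda>j. (1 / dt) *\<^sub>R ((Xm j + dX j) - Xm j)" "\<lambda>j. k j - Kfrak per J P0 Xm k j" chi]
      by simp
    then show ?thesis by linarith
  qed
  have E2iff: "(mass J Xm k \<eta>
         + l2pc J (drho J (\<lambda>j. Xm j + dX j))
                  (\<lambda>j. (1 / norm (drho J Xm j)) *\<^sub>R drho J \<eta> j)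
       = - ((\<Sum>p\<in>P1. rho_hat p * (interp J \<eta> p \<bullet> (0, 1)))
           + (\<Sum>p\<in>P2. rho_hat p * (interp J \<eta> p \<bullet> (1, 0)))))
     \<longleftrightarrow> (mass J Xm k \<eta> + l2pc J (drho J dX) (gof J Xm \<eta>)
          = RHS J P1 P2 rho_hat \<eta> - l2pc J (drho J Xm) (gof J Xm \<eta>))" for \<eta>
  proof -
    have "l2pc J (drho J (\<lambda>j. Xm j + dX j)) (gof J Xm \<eta>)
        = l2pc J (drho J Xm) (gof J Xm \<eta>) + l2pc J (drho J dX) (gof J Xm \<eta>)"
      by (simp add: drho_add l2pc_add1)
    then show ?thesis unfolding RHS_def gof_def by linarith
  qed
  have Aeq: "Aform J P0 Xm dt Z w = mass J Xm (a1of J P0 dt Z) (kof w)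
      + (mass J Xm k (dXof w) + l2pc J (drho J dX) (gof J Xm (dXof w)))" for w
    by (simp add: Aform_def dXZ)
  have Feq: "Fform per J P0 P1 P2 rho_hat Xm w = - mass J Xm cK (kof w)
      + (RHS J P1 P2 rho_hat (dXof w) - l2pc J (drho J Xm) (gof J Xm (dXof w)))" for w
    by (simp add: Fform_def cK_def)
  have ZS: "Z \<in> SS per J D P0 P1 P2 \<longleftrightarrow> dX \<in> Vh_d per J D P0 P1 P2 \<and> k \<in> Vh per J"
    by (simp add: SS_def dXZ)
  show ?thesis
  proof
    assume H: ?L
    show "Z \<in> SS per J D P0 P1 P2 \<and> (\<forall>w\<in>SS per J D P0 P1 P2. Aform J P0 Xm dt Z w = Fform per J P0 P1 P2 rho_hat Xm w)"
    proof (intro conjI ballI)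
      show "Z \<in> SS per J D P0 P1 P2" using H ZS by blast
      fix w assume w: "w \<in> SS per J D P0 P1 P2"
      then have w1: "kof w \<in> Vh per J" and w2: "dXof w \<in> Vh_d per J D P0 P1 P2" by (simp_all add: SS_def)
      have "mass J Xm (a1of J P0 dt Z) (kof w) = - mass J Xm cK (kof w)"
        using H w1 E1iff by blast
      moreover have "mass J Xm k (dXof w) + l2pc J (drho J dX) (gof J Xm (dXof w))
          = RHS J P1 P2 rho_hat (dXof w) - l2pc J (drho J Xm) (gof J Xm (dXof w))"
        using H w2 E2iff by blast
      ultimately show "Aform J P0 Xm dt Z w = Fform per J P0 P1 P2 rho_hat Xm w"
        unfolding Aeq Feq by simp
    qed
  next
    assume H: "Z \<in> SS per J D P0 P1 P2 \<and> (\<forall>w\<in>SS per J D P0 P1 P2. Aform J P0 Xm dt Z w = Fform per J P0 P1 P2 rho_hat Xm w)"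
    have mem: "dX \<in> Vh_d per J D P0 P1 P2" "k \<in> Vh per J" using H ZS by blast+
    have c1: "mass J Xm (a1of J P0 dt Z) chi = - mass J Xm cK chi" if chi: "chi \<in> Vh per J" for chi
    proof -
      define w :: zfun where "w = (\<lambda>j. (0, chi j))"
      have kw: "kof w = chi" and dw: "dXof w = (\<lambda>j. 0)" by (simp_all add: w_def kof_def dXof_def)
      have "w \<in> SS per J D P0 P1 P2" using chi Vhd_zero by (simp add: SS_def kw dw)
      then have "Aform J P0 Xm dt Z w = Fform per J P0 P1 P2 rho_hat Xm w" using H by blast
      then show ?thesis unfolding Aeq Feq kw dw
        by (simp add: mass_zero2 gof_zero l2pc_zero2 RHS_zero)
    qed
    have c2: "mass J Xm k \<eta> + l2pc J (drho J dX) (gof J Xm \<eta>)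
          = RHS J P1 P2 rho_hat \<eta> - l2pc J (drho J Xm) (gof J Xm \<eta>)"
      if eta: "\<eta> \<in> Vh_d per J D P0 P1 P2" for \<eta>
    proof -
      define w :: zfun where "w = (\<lambda>j. (\<eta> j, 0))"
      have kw: "kof w = (\<lambda>j. 0)" and dw: "dXof w = \<eta>" by (simp_all add: w_def kof_def dXof_def)
      have "w \<in> SS per J D P0 P1 P2" using eta Vh_zero by (simp add: SS_def kw dw)
      then have "Aform J P0 Xm dt Z w = Fform per J P0 P1 P2 rho_hat Xm w" using H by blast
      then show ?thesis unfolding Aeq Feq kw dw
        by (simp add: mass_zero2)
    qed
    show ?L
      using mem c1 c2 E1iff E2iff by blast
  qed
qed

lemma ex1_pair:
  assumes "\<exists>!Z::zfun. Q Z"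
  shows "\<exists>!z. case z of (dX, k) \<Rightarrow> Q (\<lambda>j. (dX j, k j))"
proof -
  obtain Z where QZ: "Q Z" and un: "\<And>Z'. Q Z' \<Longrightarrow> Z' = Z" using assms by blast
  show ?thesis
  proof (rule ex1I[of _ "(dXof Z, kof Z)"])
    have "(\<lambda>j. (dXof Z j, kof Z j)) = Z" by (simp add: dXof_def kof_def)
    then show "case (dXof Z, kof Z) of (dX, k) \<Rightarrow> Q (\<lambda>j. (dX j, k j))" using QZ by simp
  next
    fix z assume h: "case z of (dX, k) \<Rightarrow> Q (\<lambda>j. (dX j, k j))"
    obtain a b where z: "z = (a, b)" by (cases z)
    then have "Q (\<lambda>j. (a j, b j))" using h by simp
    then have e: "(\<lambda>j. (a j, b j)) = Z" by (rule un)
    have "a = dXof Z" unfolding dXof_def e[symmetric] by simp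
    moreover have "b = kof Z" unfolding kof_def e[symmetric] by simp
    ultimately have "a = dXof Z" "b = kof Z" by simp_all
    then show "z = (dXof Z, kof Z)" using z by simp
  qed
qed

theorem lemma4p2:
  fixes per :: bool and J :: nat and D P0 P1 P2 :: "real set"
    and rho_hat :: "real \<Rightarrow> real" and Xm :: vfun and dt :: real
  assumes "J \<ge> 3"
    and "D \<union> P0 \<union> P1 \<union> P2 = bdry per"
    and "D \<inter> P0 = {}" and "D \<inter> P1 = {}" and "D \<inter> P2 = {}"
    and "P0 \<inter> P1 = {}" and "P0 \<inter> P2 = {}" and "P1 \<inter> P2 = {}"
    and "\<forall>p\<in>{0, 1}. \<bar>rho_hat p\<bar> \<le> 1"
    and "Xm \<in> Vh_d0 per J P0"
    and "assmA J P0 Xm"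
    and "\<forall>j\<le>J. node J j \<notin> P0 \<longrightarrow> omega per J Xm j \<noteq> 0"
    and "dt > 0"
  shows "\<exists>!z. (case z of (dX, \<kappa>) \<Rightarrow>
      dX \<in> Vh_d per J D P0 P1 P2 \<and> \<kappa> \<in> Vh per J \<and>
      (\<forall>chi\<in>Vh per J.
         mass J Xm (\<lambda>j. (1 / dt) *\<^sub>R ((Xm j + dX j) - Xm j)) chi
       = mass J Xm (\<lambda>j. \<kappa> j - Kfrak per J P0 Xm \<kappa> j) chi) \<and>
      (\<forall>\<eta>\<in>Vh_d per J D P0 P1 P2.
         mass J Xm \<kappa> \<eta>
         + l2pc J (drho J (\<lambda>j. Xm j + dX j))
                  (\<lambda>j. (1 / norm (drho J Xm j)) *\<^sub>R drho J \<eta> j)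
       = - ((\<Sum>p\<in>P1. rho_hat p * (interp J \<eta> p \<bullet> (0, 1)))
           + (\<Sum>p\<in>P2. rho_hat p * (interp J \<eta> p \<bullet> (1, 0))))))"
proof -
  have J0: "J > 0" using assms(1) by simp
  have d: "\<forall>j\<in>{1..J}. drho J Xm j \<noteq> 0" using assms(11) by (simp add: assmA_def)
  have perP0: "per \<longrightarrow> P0 = {}" using assms(2) by (auto simp: bdry_def)
  have fT: "finite ((\<lambda>(j, b). (\<lambda>i. if i = j then b else 0)) ` ({..J} \<times> (Basis :: ((real \<times> real) \<times> (real \<times> real)) set)))"
    by simp
  have ex1: "\<exists>!Z. Z \<in> SS per J D P0 P1 P2 \<and> (\<forall>w\<in>SS per J D P0 P1 P2. Aform J P0 Xm dt Z w = Fform per J P0 P1 P2 rho_hat Xm w)"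
  proof (rule vector_space.fd_lax_milgram[OF vs_fscale SS_subspace fT SS_findim])
    show "Aform J P0 Xm dt (x + y) w = Aform J P0 Xm dt x w + Aform J P0 Xm dt y w" for x y w by (rule Aform_add1)
    show "Aform J P0 Xm dt (fscale c x) w = c * Aform J P0 Xm dt x w" for c x w by (rule Aform_scale1)
    show "Aform J P0 Xm dt x (v + w) = Aform J P0 Xm dt x v + Aform J P0 Xm dt x w" for x v w by (rule Aform_add2)
    show "Aform J P0 Xm dt x (fscale c w) = c * Aform J P0 Xm dt x w" for c x w by (rule Aform_scale2)
    show "Fform per J P0 P1 P2 rho_hat Xm (v + w) = Fform per J P0 P1 P2 rho_hat Xm v + Fform per J P0 P1 P2 rho_hat Xm w" for v w by (rule Fform_add)
    show "Fform per J P0 P1 P2 rho_hat Xm (fscale c w) = c * Fform per J P0 P1 P2 rho_hat Xm w" for c w by (rule Fform_scale)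
    show "z = 0" if "z \<in> SS per J D P0 P1 P2" "\<forall>w\<in>SS per J D P0 P1 P2. Aform J P0 Xm dt z w = 0" for z
      using coercive[OF J0 d assms(13) perP0 that] .
  qed
  show ?thesis
    unfolding equiv_sys by (rule ex1_pair[OF ex1])
qed

end
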